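(* Let $K$ be a field of characteristic $p$, let $n\ge 1$, let $\alpha,\lambda\in K\setminus K^p$, and let $f\colon V_{n,\alpha}\to V_{1,\lambda}\subset \mathbf{G}_a^p$ be a nonzero $K$-group homomorphism. Then $K^p(\alpha)=K^p(\lambda)$, and each coordinate of $f$, written as a $p$-polynomial in $S,(S_j)_j$ of degree at most $1$ in $S$, has the form $aS+\sum_j b_j S_j^{p^{n-1}}$ with $a,b_j\in K$ (i.e. it is homogeneous linear in $S$ and homogeneous of degree $p^{n-1}$ in the $S_j$). Moreover, if $X, X_0,\dots,X_{p-2}$ denote the coordinates on $V_{1,\lambda}$, then the $X$-coordinate of $f$ is $aS$ for some $0\neq a\in K$.
   Context: For $\beta\in K$ and $m\ge 1$, $V_{m,\beta}$ is the $K$-subgroup scheme of $\mathbf{G}_a^{p^m-p^{m-1}+1}$, with coordinates $S$ and $S_j$ for $0\le j<p^m$, $j\not\equiv -1 \pmod p$, defined by $$-S + \beta^{p-1}S^p + \sum_{\substack{0\le j<p^m\\ j\not\equiv -1 \ (\mathrm{mod}\ p)}} \beta^j S_j^{p^m} = 0.$$ In particular $V_{1,\lambda}\subset\mathbf{G}_a^p$ has coordinates $X,X_0,\dots,X_{p-2}$ and equation $-X+\lambda^{p-1}X^p+\sum_{j=0}^{p-2}\lambda^jX_j^p=0$. A $p$-polynomial is a polynomial that is a sum of terms $cY^{p^e}$ with $c\in K$, $e\ge 0$, $Y$ a variable. Every homomorphism $V_{n,\alpha}\to\mathbf{G}_a$ is given by a unique $p$-polynomial in $S,(S_j)_j$ of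 degree at most $1$ in $S$. *)

theory Defs
  imports Main "HOL-Library.Poly_Mapping" "HOL-Computational_Algebra.Primes"
begin

datatype var = SV | SJ nat

type_synonym 'k mpoly = "(var \<Rightarrow>\<^sub>0 nat) \<Rightarrow>\<^sub>0 'k"

definition mconst :: "'k::comm_ring_1 \<Rightarrow> 'k mpoly" where
  "mconst c = Poly_Mapping.single 0 c"

definition mvar :: "var \<Rightarrow> 'k::comm_ring_1 mpoly" where
  "mvar v = Poly_Mapping.single (Poly_Mapping.single v 1) 1"

definition Jidx :: "nat \<Rightarrow> nat \<Rightarrow> nat set" where
  "Jidx p m = {j. j < p ^ m \<and> j mod p \<noteq> p - 1}"

definition Veq :: "nat \<Rightarrow> nat \<Rightarrow> 'k::comm_ring_1 \<Rightarrow> 'k mpoly" where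
  "Veq p m \<beta> = - mvar SV + mconst (\<beta> ^ (p - 1)) * mvar SV ^ p
      + (\<Sum>j\<in>Jidx p m. mconst (\<beta> ^ j) * mvar (SJ j) ^ (p ^ m))"

definition is_ppoly :: "nat \<Rightarrow> 'k::comm_ring_1 mpoly \<Rightarrow> bool" where
  "is_ppoly p P \<longleftrightarrow> (\<forall>m\<in>Poly_Mapping.keys P. \<exists>v e. m = Poly_Mapping.single v (p ^ e))"

definition degS_le1 :: "'k::comm_ring_1 mpoly \<Rightarrow> bool" where
  "degS_le1 P \<longleftrightarrow> (\<forall>m\<in>Poly_Mapping.keys P. Poly_Mapping.lookup m SV \<le> 1)"

definition hom_coord :: "nat \<Rightarrow> nat \<Rightarrow> 'k::comm_ring_1 mpoly \<Rightarrow> bool" where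
  "hom_coord p n P \<longleftrightarrow> is_ppoly p P \<and> degS_le1 P \<and>
     (\<forall>m\<in>Poly_Mapping.keys P. \<forall>j. Poly_Mapping.lookup m (SJ j) \<noteq> 0 \<longrightarrow> j \<in> Jidx p n)"

(* A K-group homomorphism f : V_{n,alpha} \<rightarrow> V_{1,lambda} \<subseteq> G_a^p, given by its
  coordinates F (the X-coordinate) and Fs j (the X_j-coordinate, j \<le> p-2):
  each is a homomorphism V_{n,alpha} \<rightarrow> G_a (a p-polynomial of degree \<le> 1 in S),
  and the defining equation of V_{1,lambda} pulled back along f vanishes in the
  coordinate ring K[S,S_j]/(Veq p n alpha) of V_{n,alpha}. *)
definition is_hom_V :: "nat \<Rightarrow> nat \<Rightarrow> 'k::field \<Rightarrow> 'k \<Rightarrow> 'k mpoly \<Rightarrow> (nat \<Rightarrow> 'k mpoly) \<Rightarrow> bool" where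
  "is_hom_V p n \<alpha> lam F Fs \<longleftrightarrow>
     hom_coord p n F \<and> (\<forall>j<p - 1. hom_coord p n (Fs j)) \<and>
     Veq p n \<alpha> dvd
       (- F + mconst (lam ^ (p - 1)) * F ^ p + (\<Sum>j<p - 1. mconst (lam ^ j) * Fs j ^ p))"

definition is_subfield :: "'k::field set \<Rightarrow> bool" where
  "is_subfield F \<longleftrightarrow> 0 \<in> F \<and> 1 \<in> F \<and> (\<forall>x\<in>F. \<forall>y\<in>F. x + y \<in> F \<and> x * y \<in> F)
     \<and> (\<forall>x\<in>F. - x \<in> F \<and> inverse x \<in> F)"

definition Kp_adj :: "nat \<Rightarrow> 'k::field \<Rightarrow> 'k set" where
  "Kp_adj p a = \<Inter>{F. is_subfield F \<and> range (\<lambda>x. x ^ p) \<subseteq> F \<and> a \<in> F}"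

end

theory Submission
  imports Defs "HOL-Computational_Algebra.Polynomial_Factorial"
begin

definition mon :: "(var \<Rightarrow> 'b::comm_ring_1) \<Rightarrow> (var \<Rightarrow>\<^sub>0 nat) \<Rightarrow> 'b" where
  "mon \<sigma> m = (\<Prod>v\<in>Poly_Mapping.keys m. \<sigma> v ^ Poly_Mapping.lookup m v)"

lemma mon_superset:
  assumes "finite U" "Poly_Mapping.keys m \<subseteq> U"
  shows "mon \<sigma> m = (\<Prod>v\<in>U. \<sigma> v ^ Poly_Mapping.lookup m v)"
  unfolding mon_def
  by (rule prod.mono_neutral_left) (use assms in \<open>auto simp: in_keys_iff\<close>)

lemma mon_add: "mon \<sigma> (m + m') = mon \<sigma> m * mon \<sigma> m'"
proof -
  let ?U = "Poly_Mapping.keys m \<union> Poly_Mapping.keys m'"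
  have "mon \<sigma> (m + m') = (\<Prod>v\<in>?U. \<sigma> v ^ Poly_Mapping.lookup (m + m') v)"
    by (rule mon_superset) (auto simp: in_keys_iff lookup_add)
  also have "\<dots> = (\<Prod>v\<in>?U. \<sigma> v ^ Poly_Mapping.lookup m v * \<sigma> v ^ Poly_Mapping.lookup m' v)"
    by (simp add: lookup_add power_add)
  also have "\<dots> = mon \<sigma> m * mon \<sigma> m'"
    by (simp add: prod.distrib mon_superset[of ?U])
  finally show ?thesis .
qed

lemma mon_zero [simp]: "mon \<sigma> 0 = 1"
  by (simp add: mon_def)

lemma mon_single [simp]: "mon \<sigma> (Poly_Mapping.single v k) = \<sigma> v ^ k"
  by (cases "k = 0") (simp_all add: mon_def)

definition ev :: "(var \<Rightarrow> 'k::field poly poly) \<Rightarrow> 'k mpoly \<Rightarrow> 'k poly poly" where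
  "ev \<sigma> P = (\<Sum>m\<in>Poly_Mapping.keys P. [:[:Poly_Mapping.lookup P m:]:] * mon \<sigma> m)"

lemma ev_superset:
  assumes "finite U" "Poly_Mapping.keys P \<subseteq> U"
  shows "ev \<sigma> P = (\<Sum>m\<in>U. [:[:Poly_Mapping.lookup P m:]:] * mon \<sigma> m)"
  unfolding ev_def
  by (rule sum.mono_neutral_left) (use assms in \<open>auto simp: in_keys_iff\<close>)

lemma ev_zero [simp]: "ev \<sigma> 0 = 0"
  by (simp add: ev_def)

lemma smult_pC_add: "smult [:a + b:] x = smult [:a:] x + smult [:b:] (x::'a::comm_ring_1 poly poly)"
proof -
  have "[:a + b:] = [:a:] + [:b:]" by simp
  then show ?thesis by (simp only: smult_add_left)
qed

lemma ev_add: "ev \<sigma> (P + Q) = ev \<sigma> P + ev \<sigma> Q"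
proof -
  let ?U = "Poly_Mapping.keys P \<union> Poly_Mapping.keys Q"
  have "ev \<sigma> (P + Q) = (\<Sum>m\<in>?U. [:[:Poly_Mapping.lookup (P + Q) m:]:] * mon \<sigma> m)"
    by (rule ev_superset) (auto simp: in_keys_iff lookup_add)
  also have "\<dots> = (\<Sum>m\<in>?U. [:[:Poly_Mapping.lookup P m:]:] * mon \<sigma> m + [:[:Poly_Mapping.lookup Q m:]:] * mon \<sigma> m)"
    by (intro sum.cong refl) (simp add: lookup_add smult_pC_add)
  also have "\<dots> = ev \<sigma> P + ev \<sigma> Q"
    by (simp add: sum.distrib ev_superset[of ?U])
  finally show ?thesis .
qed

lemma ev_single [simp]: "ev \<sigma> (Poly_Mapping.single m c) = [:[:c:]:] * mon \<sigma> m"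
  by (cases "c = 0") (simp_all add: ev_def)

lemma ev_sum: "ev \<sigma> (sum f A) = (\<Sum>i\<in>A. ev \<sigma> (f i))"
  by (induction A rule: infinite_finite_induct) (auto simp: ev_add)

lemma pm_expand: "P = (\<Sum>m\<in>Poly_Mapping.keys P. Poly_Mapping.single m (Poly_Mapping.lookup P m))"
  by (rule poly_mapping_eqI) (auto simp: lookup_sum lookup_single when_def in_keys_iff
      intro: sym[OF sum.mono_neutral_right[where S="{_}", simplified]])

lemma ev_mult: "ev \<sigma> (P * Q) = ev \<sigma> P * ev \<sigma> Q"
proof -
  let ?s = "\<lambda>P m. Poly_Mapping.single m (Poly_Mapping.lookup P m)"
  have "P * Q = (\<Sum>m\<in>Poly_Mapping.keys P. ?s P m) * (\<Sum>m'\<in>Poly_Mapping.keys Q. ?s Q m')"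
    by (subst pm_expand[of P], subst pm_expand[of Q]) (rule refl)
  also have "\<dots> = (\<Sum>m\<in>Poly_Mapping.keys P. \<Sum>m'\<in>Poly_Mapping.keys Q. ?s P m * ?s Q m')"
    by (simp add: sum_product)
  finally have "ev \<sigma> (P * Q) = (\<Sum>m\<in>Poly_Mapping.keys P. \<Sum>m'\<in>Poly_Mapping.keys Q. ev \<sigma> (?s P m * ?s Q m'))"
    by (simp add: ev_sum)
  also have "\<dots> = (\<Sum>m\<in>Poly_Mapping.keys P. \<Sum>m'\<in>Poly_Mapping.keys Q.
       ([:[:Poly_Mapping.lookup P m:]:] * mon \<sigma> m) * ([:[:Poly_Mapping.lookup Q m':]:] * mon \<sigma> m'))"
    by (intro sum.cong refl) (simp add: mult_single mon_add mult_ac)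
  also have "\<dots> = ev \<sigma> P * ev \<sigma> Q"
    by (simp add: ev_def sum_product)
  finally show ?thesis .
qed

lemma ev_one [simp]: "ev \<sigma> 1 = 1"
proof -
  have "(1::'a::field mpoly) = Poly_Mapping.single 0 1" by simp
  then show ?thesis by (metis ev_single mon_zero mult_1_right pCons_one)
qed

lemma ev_power: "ev \<sigma> (P ^ k) = ev \<sigma> P ^ k"
  by (induction k) (simp_all add: ev_mult)

lemma ev_uminus: "ev \<sigma> (- P) = - ev \<sigma> P"
  by (metis add_eq_0_iff ev_add ev_zero)

lemma ev_mconst [simp]: "ev \<sigma> (mconst c) = [:[:c:]:]"
  by (simp add: mconst_def)

lemma ev_mvar [simp]: "ev \<sigma> (mvar v) = \<sigma> v"
  by (simp add: mvar_def flip: one_pCons)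

lemma coeff_linear_power_pred:
  fixes a :: "'a::comm_ring_1"
  shows "coeff ([:a, 1:] ^ Suc n) n = of_nat (Suc n) * a"
proof (induction n)
  case 0
  then show ?case by simp
next
  case (Suc n)
  have "[:a, 1:] ^ Suc (Suc n) = [:a, 1:] * [:a, 1:] ^ Suc n" by simp
  also have "\<dots> = smult a ([:a, 1:] ^ Suc n) + pCons 0 ([:a, 1:] ^ Suc n)"
    by (simp add: algebra_simps)
  finally have "coeff ([:a, 1:] ^ Suc (Suc n)) (Suc n)
      = a * coeff ([:a, 1:] ^ Suc n) (Suc n) + coeff ([:a, 1:] ^ Suc n) n"
    by simp
  also have "\<dots> = a + of_nat (Suc n) * a"
    using Suc by (simp only: coeff_linear_power) simp
  finally show ?case by (simp add: algebra_simps)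
qed

definition Ecoef :: "'a::zero set \<Rightarrow> 'a poly \<Rightarrow> bool" where
  "Ecoef E q \<longleftrightarrow> (\<forall>i. coeff q i \<in> E)"

lemma subfield_sum:
  assumes "is_subfield E" "\<And>i. i \<in> A \<Longrightarrow> f i \<in> E"
  shows "sum f A \<in> E"
  using assms(2)
proof (induction A rule: infinite_finite_induct)
  case (infinite A) then show ?case using assms(1) by (simp add: is_subfield_def)
next
  case empty then show ?case using assms(1) by (simp add: is_subfield_def)
next
  case (insert x F)
  then show ?case using assms(1) by (simp add: is_subfield_def)
qed

lemma subfield_power:
  assumes "is_subfield E" "x \<in> E" shows "x ^ k \<in> E"
  using assms by (induction k) (auto simp: is_subfield_def)

lemma subfield_diff:
  assumes "is_subfield E" "x \<in> E" "y \<in> E" shows "x - y \<in> E"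
  using assms unfolding is_subfield_def by (metis diff_conv_add_uminus)

lemma subfield_div:
  assumes "is_subfield E" "x \<in> E" "y \<in> E" shows "x / y \<in> E"
  using assms unfolding is_subfield_def by (metis divide_inverse)

lemma division_E:
  fixes q :: "'a::field poly"
  assumes E: "is_subfield E" and q: "Ecoef E q" "lead_coeff q = 1" "degree q = m"
  shows "Ecoef E f \<Longrightarrow> \<exists>s r. Ecoef E r \<and> f = s * q + r \<and> (r = 0 \<or> degree r < m)"
proof (induction "degree f" arbitrary: f rule: less_induct)
  case less
  show ?case
  proof (cases "f = 0 \<or> degree f < m")
    case True
    then show ?thesis using less.prems by (intro exI[of _ 0] exI[of _ f]) auto
  next
    case False
    define f' where "f' = f - monom (lead_coeff f) (degree f - m) * q"
    have ec: "Ecoef E f'"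
    proof -
      have "coeff f i - (if i < degree f - m then 0 else lead_coeff f * coeff q (i - (degree f - m))) \<in> E" for i
        using less.prems q(1) E by (intro subfield_diff) (auto simp: Ecoef_def is_subfield_def)
      then show ?thesis unfolding Ecoef_def f'_def coeff_diff coeff_monom_mult by blast
    qed
    have cf: "coeff f' (degree f) = 0"
    proof -
      have "degree f - (degree f - m) = m" "\<not> degree f < degree f - m" using False by auto
      then show ?thesis unfolding f'_def coeff_diff coeff_monom_mult using q(2,3) by simp
    qed
    have dq: "degree (monom (lead_coeff f) (degree f - m) * q) \<le> degree f"
      using False q
    proof -
      have "degree (monom (lead_coeff f) (degree f - m) * q) \<le> (degree f - m) + m"
        using degree_mult_le[of "monom (lead_coeff f) (degree f - m)" q]
          degree_monom_le[of "lead_coeff f" "degree f - m"] q(3) by linarith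
      then show ?thesis using False by simp
    qed
    have "degree f' \<le> degree f"
      unfolding f'_def by (meson degree_diff_le le_refl dq)
    then have "f' = 0 \<or> degree f' < degree f"
      using cf by (metis le_neq_implies_less leading_coeff_0_iff)
    then show ?thesis
    proof
      assume "f' = 0"
      then show ?thesis
        by (intro exI[of _ "monom (lead_coeff f) (degree f - m)"] exI[of _ 0])
           (auto simp: Ecoef_def f'_def E[unfolded is_subfield_def])
    next
      assume "degree f' < degree f"
      from less.hyps[OF this ec] obtain s r where
        "Ecoef E r" "f' = s * q + r" "r = 0 \<or> degree r < m" by blast
      then show ?thesis
        by (intro exI[of _ "s + monom (lead_coeff f) (degree f - m)"] exI[of _ r])
           (auto simp: f'_def algebra_simps)
    qed
  qed
qed

lemma dvd_linear_power:
  fixes x :: "'a::field"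
  shows "lead_coeff q = 1 \<Longrightarrow> q dvd [:- x, 1:] ^ n \<Longrightarrow> q = [:- x, 1:] ^ degree q"
proof (induction n arbitrary: q)
  case 0
  then have "degree q = 0" by (metis degree_1 divides_degree one_neq_zero power_0 le_zero_eq)
  then show ?case using 0(1) by (metis degree_eq_zeroE lead_coeff_pCons(2) pCons_one power_0 pCons_0_0)
next
  case (Suc n)
  obtain t where t: "[:- x, 1:] ^ Suc n = q * t" using Suc.prems(2) by (elim dvdE)
  have lnz: "[:- x, 1:] \<noteq> 0" by simp
  show ?case
  proof (cases "poly t x = 0")
    case True
    then obtain t1 where "t = [:- x, 1:] * t1" using poly_eq_0_iff_dvd by (metis dvdE)
    then have "[:- x, 1:] * [:- x, 1:] ^ n = [:- x, 1:] * (q * t1)" using t by (metis power_Suc mult.left_commute)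
    then have "[:- x, 1:] ^ n = q * t1" using lnz mult_left_cancel by blast
    then have "q dvd [:- x, 1:] ^ n" by simp
    then show ?thesis using Suc.IH Suc.prems(1) by blast
  next
    case False
    have "poly ([:- x, 1:] ^ Suc n) x = 0" by simp
    then have "poly (q * t) x = 0" using t by metis
    then have "poly q x = 0" using False by simp
    then obtain q1 where q1: "q = [:- x, 1:] * q1" using poly_eq_0_iff_dvd by (metis dvdE)
    then have "[:- x, 1:] * [:- x, 1:] ^ n = [:- x, 1:] * (q1 * t)" using t by (metis power_Suc mult.assoc)
    then have "[:- x, 1:] ^ n = q1 * t" using lnz mult_left_cancel by blast
    then have d: "q1 dvd [:- x, 1:] ^ n" by simp
    have "lead_coeff [:- x, 1:] = 1" by simp
    then have l1: "lead_coeff q1 = 1" using Suc.prems(1) q1 by (metis lead_coeff_mult mult_1)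
    then have q1nz: "q1 \<noteq> 0" by auto
    have "q1 = [:- x, 1:] ^ degree q1" using Suc.IH[OF l1 d] .
    moreover have "degree q = Suc (degree q1)"
      using q1 q1nz degree_mult_eq[of "[:- x, 1:]" q1] lnz by (metis degree_linear_power power_one_right plus_1_eq_Suc)
    ultimately show ?thesis using q1 by simp
  qed
qed

lemma subfield_of_nat:
  assumes "is_subfield E" shows "of_nat k \<in> E"
  using assms by (induction k) (auto simp: is_subfield_def)

lemma indep:
  fixes E :: "'a::field set" and x :: 'a
  assumes ch: "CHAR('a) = p" "prime p" and E: "is_subfield E" and xp: "x ^ p \<in> E"
    and xE: "x \<notin> E" and e: "\<forall>i<p. e i \<in> E" and s: "(\<Sum>i<p. e i * x ^ i) = 0"
  shows "\<forall>i<p. e i = 0"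
proof (rule ccontr)
  assume ne: "\<not> (\<forall>i<p. e i = 0)"
  have E0: "0 \<in> E" and E1: "1 \<in> E" and Eadd: "\<And>a b. a \<in> E \<Longrightarrow> b \<in> E \<Longrightarrow> a + b \<in> E"
    and Emul: "\<And>a b. a \<in> E \<Longrightarrow> b \<in> E \<Longrightarrow> a * b \<in> E"
    and Eneg: "\<And>a. a \<in> E \<Longrightarrow> - a \<in> E" and Einv: "\<And>a. a \<in> E \<Longrightarrow> inverse a \<in> E"
    using E by (auto simp: is_subfield_def)
  have p2: "p \<ge> 2" using ch(2) prime_ge_2_nat by blast
  define q0 where "q0 = (\<Sum>i<p. monom (e i) i)"
  have cq0: "coeff q0 i = (if i < p then e i else 0)" for i
    by (simp add: q0_def coeff_sum coeff_monom)
  have q0nz: "q0 \<noteq> 0" using ne cq0 by (metis coeff_0)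
  have q0E: "Ecoef E q0" using cq0 e E0 by (auto simp: Ecoef_def)
  have q0x: "poly q0 x = 0" using s by (simp add: q0_def poly_sum poly_monom)
  have dq0: "degree q0 < p"
  proof -
    have "degree q0 \<le> p - 1" by (rule degree_le) (use cq0 in auto)
    then show ?thesis using p2 by linarith
  qed
  define D where "D = {d. \<exists>q. q \<noteq> 0 \<and> Ecoef E q \<and> poly q x = 0 \<and> degree q = d}"
  have "degree q0 \<in> D" using q0nz q0E q0x by (auto simp: D_def)
  define m where "m = (LEAST d. d \<in> D)"
  have mD: "m \<in> D" unfolding m_def by (rule LeastI) fact
  have mle: "m \<le> degree q0" unfolding m_def by (rule Least_le) fact
  have mmin: "\<And>d. d \<in> D \<Longrightarrow> m \<le> d" unfolding m_def by (rule Least_le)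
  obtain q where q: "q \<noteq> 0" "Ecoef E q" "poly q x = 0" "degree q = m" using mD by (auto simp: D_def)
  have m0: "m \<noteq> 0"
  proof
    assume "m = 0"
    then obtain c where "q = [:c:]" using q(4) by (metis degree_eq_zeroE)
    then show False using q(1,3) by simp
  qed
  define qm where "qm = smult (inverse (lead_coeff q)) q"
  have lq: "lead_coeff q \<noteq> 0" using q(1) by simp
  have lqE: "lead_coeff q \<in> E" using q(2) by (simp add: Ecoef_def)
  have qm: "Ecoef E qm" "lead_coeff qm = 1" "degree qm = m" "poly qm x = 0"
    using q lq lqE Emul Einv by (auto simp: qm_def Ecoef_def)
  define f where "f = monom 1 p - [:x ^ p:]"
  have fE: "Ecoef E f"
    unfolding Ecoef_def f_def coeff_diff coeff_monom
    using E0 E1 xp Eneg by (auto intro!: subfield_diff[OF E] simp: coeff_pCons split: nat.splits)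
  obtain s r where sr: "Ecoef E r" "f = s * qm + r" "r = 0 \<or> degree r < m"
    using division_E[OF E qm(1,2,3) fE] by blast
  have "poly f x = 0" by (simp add: f_def poly_monom)
  then have rx: "poly r x = 0" using sr(2) qm(4) by simp
  have r0: "r = 0"
  proof (rule ccontr)
    assume "r \<noteq> 0"
    then have "degree r \<in> D" using sr(1) rx by (auto simp: D_def)
    then have "m \<le> degree r" by (rule mmin)
    then show False using sr(3) \<open>r \<noteq> 0\<close> by linarith
  qed
  have lin: "[:- x, 1:] = [:- x:] + monom 1 1" by (simp add: monom_Suc)
  have "[:- x, 1:] ^ p = [:- x:] ^ p + monom 1 1 ^ p"
    unfolding lin by (rule freshmans_dream) (simp_all add: ch)
  also have "\<dots> = [:(- x) ^ p:] + monom 1 p" by (simp add: monom_power poly_const_pow)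
  also have "(- x) ^ p = - (x ^ p)" by (rule minus_power_prime_CHAR) (use ch in auto)
  finally have fl: "f = [:- x, 1:] ^ p" by (simp add: f_def)
  have "qm dvd [:- x, 1:] ^ p" using sr(2) r0 fl by simp
  then have qk: "qm = [:- x, 1:] ^ m" using dvd_linear_power qm(2,3) by metis
    obtain m' where m': "m = Suc m'" using m0 by (cases m) auto
  have "coeff qm m' = of_nat m * (- x)" using qk m' coeff_linear_power_pred by metis
  moreover have "coeff qm m' \<in> E" using qm(1) by (simp add: Ecoef_def)
  ultimately have "of_nat m * (- x) \<in> E" by simp
  moreover have "(of_nat m :: 'a) \<noteq> 0"
  proof
    assume "(of_nat m :: 'a) = 0"
    then have "p dvd m" using ch(1) of_nat_eq_0_iff_char_dvd by metis
    then show False using m0 mle dq0 by (meson dvd_imp_le leD le_less_trans not_gr0)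
  qed
  ultimately have "x \<in> E"
    using subfield_div[OF E _ subfield_of_nat[OF E], of "of_nat m * (- x)" m] Eneg
    by (metis minus_minus nonzero_mult_div_cancel_left)
  then show False using xE by simp
qed


definition Aset :: "nat \<Rightarrow> 'a::field \<Rightarrow> 'a set" where
  "Aset p x = range (\<lambda>c. \<Sum>i<p. c i ^ p * x ^ i)"

locale charp =
  fixes p :: nat and ty :: "'a::field itself"
  assumes ch: "CHAR('a) = p" and pr: "prime p"
begin

lemma p2: "p \<ge> 2" using pr prime_ge_2_nat by blast

lemma frob_add: "(a + b :: 'a) ^ p = a ^ p + b ^ p"
  by (rule freshmans_dream) (use ch pr in auto)

lemma frob_neg: "(- a :: 'a) ^ p = - (a ^ p)"
  by (rule minus_power_prime_CHAR) (use ch pr in auto)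

lemma frob_diff: "(a - b :: 'a) ^ p = a ^ p - b ^ p"
  by (metis diff_conv_add_uminus frob_add frob_neg)

lemma frob_inj: "(a :: 'a) ^ p = b ^ p \<Longrightarrow> a = b"
  by (metis frob_diff diff_eq_diff_eq diff_self power_eq_0_iff right_minus_eq)

lemma Kp_subfield: "is_subfield (range (\<lambda>x::'a. x ^ p))"
  unfolding is_subfield_def
proof (intro conjI ballI)
  show "0 \<in> range (\<lambda>x::'a. x ^ p)" using p2 by (intro image_eqI[of _ _ 0]) auto
  show "1 \<in> range (\<lambda>x::'a. x ^ p)" by (intro image_eqI[of _ _ 1]) auto
  fix x y assume "x \<in> range (\<lambda>x::'a. x ^ p)" "y \<in> range (\<lambda>x::'a. x ^ p)"
  then obtain a b where ab: "x = a ^ p" "y = b ^ p" by auto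
  show "x + y \<in> range (\<lambda>x::'a. x ^ p)" using ab frob_add by (intro image_eqI[of _ _ "a + b"]) auto
  show "x * y \<in> range (\<lambda>x::'a. x ^ p)" using ab by (intro image_eqI[of _ _ "a * b"]) (auto simp: power_mult_distrib)
  show "- x \<in> range (\<lambda>x::'a. x ^ p)" using ab frob_neg by (intro image_eqI[of _ _ "- a"]) auto
  show "inverse x \<in> range (\<lambda>x::'a. x ^ p)" using ab by (intro image_eqI[of _ _ "inverse a"]) (auto simp: power_inverse)
qed

lemma A_add: "(y::'a) \<in> Aset p x \<Longrightarrow> z \<in> Aset p x \<Longrightarrow> y + z \<in> Aset p x"
proof -
  assume "y \<in> Aset p x" "z \<in> Aset p x"
  then obtain c d where "y = (\<Sum>i<p. c i ^ p * x ^ i)" "z = (\<Sum>i<p. d i ^ p * x ^ i)"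
    by (auto simp: Aset_def)
  then have "y + z = (\<Sum>i<p. (c i + d i) ^ p * x ^ i)"
    by (simp add: frob_add sum.distrib algebra_simps)
  then show ?thesis by (auto simp: Aset_def)
qed

lemma A_neg: "(y::'a) \<in> Aset p x \<Longrightarrow> - y \<in> Aset p x"
proof -
  assume "y \<in> Aset p x"
  then obtain c where "y = (\<Sum>i<p. c i ^ p * x ^ i)" by (auto simp: Aset_def)
  then have "- y = (\<Sum>i<p. (- c i) ^ p * x ^ i)"
    by (simp add: frob_neg sum_negf)
  then show ?thesis by (auto simp: Aset_def)
qed

lemma A_scale: "(y::'a) \<in> Aset p x \<Longrightarrow> k ^ p * y \<in> Aset p x"
proof -
  assume "y \<in> Aset p x"
  then obtain c where "y = (\<Sum>i<p. c i ^ p * x ^ i)" by (auto simp: Aset_def)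
  then have "k ^ p * y = (\<Sum>i<p. (k * c i) ^ p * x ^ i)"
    by (simp add: sum_distrib_left power_mult_distrib mult.assoc)
  then show ?thesis by (auto simp: Aset_def)
qed

lemma A_Kp: "(k::'a) ^ p \<in> Aset p x"
proof -
  have "(\<Sum>i<p. (if i = 0 then k else 0) ^ p * x ^ i) = (\<Sum>i<p. if i = 0 then k ^ p * x ^ i else 0)"
    using p2 by (intro sum.cong) (auto simp: power_0_left)
  also have "\<dots> = k ^ p" using p2 by (subst sum.delta) auto
  finally have eq: "(\<Sum>i<p. (if i = 0 then k else 0) ^ p * x ^ i) = k ^ p" .
  show ?thesis unfolding Aset_def image_iff
    by (rule bexI[of _ "\<lambda>i. if i = 0 then k else 0"]) (use eq in auto)
qed

lemma A_zero: "0 \<in> Aset p (x::'a)"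
proof -
  have "(0::'a) ^ p = 0" using p2 by (simp add: power_0_left)
  then show ?thesis using A_Kp[of 0 x] by metis
qed
lemma A_one: "1 \<in> Aset p (x::'a)" using A_Kp[of 1 x] by (metis power_one)

lemma A_x: "(x::'a) \<in> Aset p x"
proof -
  have "(\<Sum>i<p. (if i = 1 then 1 else 0) ^ p * x ^ i) = (\<Sum>i<p. if i = 1 then x ^ i else 0)"
    using p2 by (intro sum.cong) (auto simp: power_0_left)
  also have "\<dots> = x" using p2 by (subst sum.delta) auto
  finally have eq: "(\<Sum>i<p. (if i = 1 then 1 else 0) ^ p * x ^ i) = x" .
  show ?thesis unfolding Aset_def image_iff
    by (rule bexI[of _ "\<lambda>i. if i = 1 then 1 else 0"]) (use eq in auto)
qed

lemma A_sum: "(\<And>i. i \<in> I \<Longrightarrow> f i \<in> Aset p (x::'a)) \<Longrightarrow> sum f I \<in> Aset p x"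
  by (induction I rule: infinite_finite_induct) (auto intro: A_zero A_add)

lemma A_mulx: "(y::'a) \<in> Aset p x \<Longrightarrow> x * y \<in> Aset p x"
proof -
  assume "y \<in> Aset p x"
  then obtain c where y: "y = (\<Sum>i<p. c i ^ p * x ^ i)" by (auto simp: Aset_def)
  obtain q where q: "p = Suc q" using p2 by (cases p) auto
  define c' where "c' i = (if i = 0 then x * c q else c (i - 1))" for i
  have "x * y = (\<Sum>i<q. c i ^ p * x ^ Suc i) + c q ^ p * x ^ p"
    unfolding y q by (simp add: sum_distrib_left algebra_simps)
  also have "\<dots> = (\<Sum>i<p. c' i ^ p * x ^ i)"
    unfolding q sum.lessThan_Suc_shift by (simp add: c'_def power_mult_distrib algebra_simps)
  finally show ?thesis by (auto simp: Aset_def)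
qed

lemma A_mulxpow: "(y::'a) \<in> Aset p x \<Longrightarrow> x ^ k * y \<in> Aset p x"
  by (induction k) (auto simp: mult.assoc intro: A_mulx)

lemma A_mul: "(y::'a) \<in> Aset p x \<Longrightarrow> z \<in> Aset p x \<Longrightarrow> y * z \<in> Aset p x"
proof -
  assume z: "z \<in> Aset p x" and "y \<in> Aset p x"
  then obtain c where y: "y = (\<Sum>i<p. c i ^ p * x ^ i)" by (auto simp: Aset_def)
  have "y * z = (\<Sum>i<p. c i ^ p * (x ^ i * z))" unfolding y by (simp add: sum_distrib_right mult.assoc)
  also have "\<dots> \<in> Aset p x" by (intro A_sum A_scale A_mulxpow z)
  finally show ?thesis .
qed

lemma A_pow: "(y::'a) \<in> Aset p x \<Longrightarrow> y ^ k \<in> Aset p x"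
  by (induction k) (auto intro: A_one A_mul)

lemma A_inv: "(y::'a) \<in> Aset p x \<Longrightarrow> inverse y \<in> Aset p x"
proof (cases "y = 0")
  case True then show ?thesis using A_zero by simp
next
  case False
  assume y: "y \<in> Aset p x"
  have "inverse y = (inverse y) ^ p * y ^ (p - 1)"
    using False p2 by (simp add: power_inverse field_simps flip: power_Suc)
  also have "\<dots> \<in> Aset p x" by (intro A_scale A_pow y)
  finally show ?thesis .
qed

lemma A_subfield: "is_subfield (Aset p (x::'a))"
  unfolding is_subfield_def
  by (intro conjI ballI A_zero A_one A_add A_mul A_neg A_inv)

lemma A_min:
  assumes "is_subfield F" "range (\<lambda>x. x ^ p) \<subseteq> F" "(x::'a) \<in> F"
  shows "Aset p x \<subseteq> F"
proof
  fix y assume "y \<in> Aset p x"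
  then obtain c where y: "y = (\<Sum>i<p. c i ^ p * x ^ i)" by (auto simp: Aset_def)
  have "c i ^ p * x ^ i \<in> F" for i
  proof -
    have "c i ^ p \<in> F" using assms(2) by auto
    moreover have "x ^ i \<in> F" using assms(1,3) by (rule subfield_power)
    ultimately show ?thesis using assms(1) unfolding is_subfield_def by blast
  qed
  then show "y \<in> F" unfolding y using assms(1) by (intro subfield_sum) auto
qed

lemma Kp_adj_eq: "Kp_adj p (x::'a) = Aset p x"
proof
  show "Kp_adj p x \<subseteq> Aset p x"
  proof
    fix y assume "y \<in> Kp_adj p x"
    moreover have "Aset p x \<in> {F. is_subfield F \<and> range (\<lambda>x. x ^ p) \<subseteq> F \<and> x \<in> F}"
      using A_subfield A_x A_Kp by auto
    ultimately show "y \<in> Aset p x" unfolding Kp_adj_def by blast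
  qed
  show "Aset p x \<subseteq> Kp_adj p x"
    unfolding Kp_adj_def using A_min by (intro Inter_greatest) auto
qed

end


definition lin :: "nat \<Rightarrow> 'a::field \<Rightarrow> (nat \<Rightarrow> 'a) \<Rightarrow> 'a \<Rightarrow> 'a" where
  "lin p l v y = l ^ (p - 1) * y ^ p + (\<Sum>i<p - 1. l ^ i * v i ^ p)"

primrec Rset :: "nat \<Rightarrow> 'a::field \<Rightarrow> nat \<Rightarrow> 'a set" where
  "Rset p l 0 = {0}"
| "Rset p l (Suc m) = {lin p l v y | v y. y \<in> Rset p l m}"

context charp
begin

lemma lin_as_sum: "lin p l v y = (\<Sum>i<p. (if i = p - 1 then y else v i) ^ p * (l::'a) ^ i)"
proof -
  have pe: "p = Suc (p - 1)" using p2 by simp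
  have "(\<Sum>i<p. (if i = p - 1 then y else v i) ^ p * l ^ i)
      = (\<Sum>i<p - 1. (if i = p - 1 then y else v i) ^ p * l ^ i) + y ^ p * l ^ (p - 1)"
    by (subst pe, subst sum.lessThan_Suc) simp
  also have "(\<Sum>i<p - 1. (if i = p - 1 then y else v i) ^ p * l ^ i) = (\<Sum>i<p - 1. l ^ i * v i ^ p)"
    by (intro sum.cong) (auto simp: mult.commute)
  finally show ?thesis by (simp add: lin_def algebra_simps)
qed

lemma lin_A: "lin p l v y \<in> Aset p (l::'a)"
  unfolding lin_as_sum Aset_def by (rule rangeI)

lemma lin_unique:
  assumes l: "(l::'a) \<notin> range (\<lambda>x. x ^ p)" and eq: "lin p l v y = lin p l v' y'"
  shows "y = y' \<and> (\<forall>i<p - 1. v i = v' i)"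
proof -
  define c where "c i = (if i = p - 1 then y else v i)" for i
  define c' where "c' i = (if i = p - 1 then y' else v' i)" for i
  have "(\<Sum>i<p. (c i - c' i) ^ p * l ^ i) = (\<Sum>i<p. c i ^ p * l ^ i) - (\<Sum>i<p. c' i ^ p * l ^ i)"
    by (simp add: frob_diff algebra_simps sum_subtractf)
  also have "\<dots> = 0" using eq by (simp add: lin_as_sum c_def c'_def)
  finally have s: "(\<Sum>i<p. (c i - c' i) ^ p * l ^ i) = 0" .
  have "\<forall>i<p. (c i - c' i) ^ p = 0"
    by (rule indep[OF ch pr Kp_subfield _ l _ s]) auto
  then have "\<forall>i<p. c i = c' i" using p2 by auto
  then have A: "c (p - 1) = c' (p - 1)" and B: "\<And>i. i < p - 1 \<Longrightarrow> c i = c' i" using p2 by auto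
  have "y = y'" using A by (simp add: c_def c'_def)
  moreover have "v i = v' i" if "i < p - 1" for i using B[OF that] that by (simp add: c_def c'_def)
  ultimately show ?thesis by blast
qed

lemma lin_zero_val: "lin p l (\<lambda>_. 0) 0 = (0::'a)"
  using p2 by (simp add: lin_def power_0_left)

lemma lin_zero:
  assumes l: "(l::'a) \<notin> range (\<lambda>x. x ^ p)" and eq: "lin p l v y = 0"
  shows "y = 0 \<and> (\<forall>i<p - 1. v i = 0)"
  using lin_unique[OF l, of v y "\<lambda>_. 0" 0] eq lin_zero_val by simp

lemma lin_scale: "k ^ p * lin p l v y = lin p (l::'a) (\<lambda>i. k * v i) (k * y)"
  by (simp add: lin_def sum_distrib_left power_mult_distrib algebra_simps)

lemma coeff_frob:
  fixes \<phi> :: "'a poly"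
  shows "coeff (\<phi> ^ p) k = (if p dvd k then coeff \<phi> (k div p) ^ p else 0)"
proof -
  have "\<phi> ^ p = (\<Sum>i\<le>degree \<phi>. monom (coeff \<phi> i) i) ^ p"
    by (simp add: poly_as_sum_of_monoms)
  also have "\<dots> = (\<Sum>i\<le>degree \<phi>. monom (coeff \<phi> i) i ^ p)"
    by (rule freshmans_dream_sum) (use ch pr in auto)
  also have "\<dots> = (\<Sum>i\<le>degree \<phi>. monom (coeff \<phi> i ^ p) (i * p))"
    by (simp add: monom_power)
  finally have e: "coeff (\<phi> ^ p) k = (\<Sum>i\<le>degree \<phi>. if k = i * p then coeff \<phi> i ^ p else 0)"
    by (simp add: coeff_sum coeff_monom eq_commute)
  show ?thesis
  proof (cases "p dvd k")
    case True
    then obtain j where j: "k = j * p" by (metis dvd_def mult.commute)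
    have jd: "k div p = j" using j p2 by simp
    have "(\<Sum>i\<le>degree \<phi>. if k = i * p then coeff \<phi> i ^ p else 0)
        = (\<Sum>i\<le>degree \<phi>. if i = j then coeff \<phi> i ^ p else 0)"
      using p2 j by (intro sum.cong) auto
    also have "\<dots> = coeff \<phi> j ^ p"
      using p2 by (subst sum.delta) (auto simp: coeff_eq_0 power_0_left)
    finally show ?thesis using e True jd by simp
  next
    case False
    then have "\<And>i. k \<noteq> i * p" by auto
    then show ?thesis using e False by simp
  qed
qed

lemma pow_p_inj: "p ^ a = p ^ b \<longleftrightarrow> a = b"
  using p2 by (simp add: power_inject_exp)

lemma part4:
  fixes \<phi> :: "'a poly" and \<psi> :: "nat \<Rightarrow> 'a poly" and c l :: 'a
  assumes l: "l \<notin> range (\<lambda>x. x ^ p)" and n: "n \<ge> 1"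
    and h: "- \<phi> + smult (l ^ (p - 1)) (\<phi> ^ p) + (\<Sum>i<p - 1. smult (l ^ i) (\<psi> i ^ p)) = monom c (p ^ n)"
  shows "\<forall>e\<ge>n. coeff \<phi> (p ^ e) = 0 \<and> (\<forall>i<p - 1. coeff (\<psi> i) (p ^ e) = 0)"
    and "coeff \<phi> 1 = 0"
    and "\<forall>e. 1 \<le> e \<and> e < n \<longrightarrow> coeff \<phi> (p ^ e) = lin p l (\<lambda>i. coeff (\<psi> i) (p ^ (e - 1))) (coeff \<phi> (p ^ (e - 1)))"
    and "c = lin p l (\<lambda>i. coeff (\<psi> i) (p ^ (n - 1))) (coeff \<phi> (p ^ (n - 1)))"
proof -
  define H where "H = - \<phi> + smult (l ^ (p - 1)) (\<phi> ^ p) + (\<Sum>i<p - 1. smult (l ^ i) (\<psi> i ^ p))"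
  have cH: "coeff H k = - coeff \<phi> k + l ^ (p - 1) * coeff (\<phi> ^ p) k + (\<Sum>i<p - 1. l ^ i * coeff (\<psi> i ^ p) k)" for k
    by (simp add: H_def coeff_sum)
  have eqe: "coeff H (p ^ Suc e) = - coeff \<phi> (p ^ Suc e) + lin p l (\<lambda>i. coeff (\<psi> i) (p ^ e)) (coeff \<phi> (p ^ e))" for e
  proof -
    have d: "p dvd p ^ Suc e" "p ^ Suc e div p = p ^ e" using p2 by auto
    show ?thesis unfolding cH coeff_frob d(2) using d(1) by (simp add: lin_def)
  qed
  have rhs: "coeff H (p ^ e) = (if e = n then c else 0)" for e
    unfolding H_def h by (simp add: coeff_monom pow_p_inj eq_commute)
  have "coeff H 1 = - coeff \<phi> 1"
    unfolding cH coeff_frob using p2 by (simp add: nat_dvd_1_iff_1)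
  moreover have "coeff H 1 = 0" using rhs[of 0] n by simp
  ultimately show "coeff \<phi> 1 = 0" by simp
  show "\<forall>e. 1 \<le> e \<and> e < n \<longrightarrow> coeff \<phi> (p ^ e) = lin p l (\<lambda>i. coeff (\<psi> i) (p ^ (e - 1))) (coeff \<phi> (p ^ (e - 1)))"
  proof (intro allI impI)
    fix e assume e: "1 \<le> e \<and> e < n"
    then obtain e' where e': "e = Suc e'" by (cases e) auto
    have "coeff H (p ^ e) = 0" using rhs[of e] e by simp
    then show "coeff \<phi> (p ^ e) = lin p l (\<lambda>i. coeff (\<psi> i) (p ^ (e - 1))) (coeff \<phi> (p ^ (e - 1)))"
      using eqe[of e'] e' by simp
  qed
  define Z where "Z e \<longleftrightarrow> coeff \<phi> (p ^ e) = 0 \<and> (\<forall>i<p - 1. coeff (\<psi> i) (p ^ e) = 0)" for e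
  define N where "N = max (degree \<phi>) (Max ((\<lambda>i. degree (\<psi> i)) ` {..<p - 1}))"
  have big: "Z e" if "e \<ge> N" for e
  proof -
    have "e < 2 ^ e" by (rule less_exp)
    also have "(2::nat) ^ e \<le> p ^ e" using p2 by (simp add: power_mono)
    finally have eN: "N < p ^ e" using that by linarith
    have "degree \<phi> < p ^ e" using eN by (simp add: N_def)
    moreover have "degree (\<psi> i) < p ^ e" if "i < p - 1" for i
    proof -
      have "degree (\<psi> i) \<le> Max ((\<lambda>i. degree (\<psi> i)) ` {..<p - 1})"
        using that by (intro Max_ge) auto
      then show ?thesis using eN by (simp add: N_def)
    qed
    ultimately show ?thesis by (auto simp: Z_def coeff_eq_0)
  qed
  have Zall: "Z e" if "e \<ge> n" for e
    using that
  proof (induction "N - e" arbitrary: e rule: less_induct)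
    case less
    show ?case
    proof (cases "e \<ge> N")
      case True then show ?thesis using big by simp
    next
      case False
      then have "Z (Suc e)" using less.hyps[of "Suc e"] less.prems by simp
      moreover have "coeff H (p ^ Suc e) = 0" using rhs[of "Suc e"] less.prems by simp
      ultimately have "lin p l (\<lambda>i. coeff (\<psi> i) (p ^ e)) (coeff \<phi> (p ^ e)) = 0"
        using eqe[of e] by (simp add: Z_def)
      from lin_zero[OF l this] show ?thesis by (simp add: Z_def)
    qed
  qed
  then show "\<forall>e\<ge>n. coeff \<phi> (p ^ e) = 0 \<and> (\<forall>i<p - 1. coeff (\<psi> i) (p ^ e) = 0)"
    by (simp add: Z_def)
  obtain n' where n': "n = Suc n'" using n by (cases n) auto
  have "coeff H (p ^ n) = c" using rhs[of n] by simp
  moreover have "coeff \<phi> (p ^ n) = 0" using Zall[of n] by (simp add: Z_def)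
  ultimately show "c = lin p l (\<lambda>i. coeff (\<psi> i) (p ^ (n - 1))) (coeff \<phi> (p ^ (n - 1)))"
    using eqe[of n'] n' by simp
qed

lemma lin_sum:
  "(\<Sum>k\<in>K. lin p (l::'a) (v k) (y k)) = lin p l (\<lambda>i. \<Sum>k\<in>K. v k i) (\<Sum>k\<in>K. y k)"
proof -
  have fs: "(\<Sum>k\<in>K. f k) ^ p = (\<Sum>k\<in>K. f k ^ p)" for f :: "'b \<Rightarrow> 'a"
    by (rule freshmans_dream_sum) (use ch pr in auto)
  show ?thesis
    unfolding lin_def fs sum.distrib sum_distrib_left
    by (subst sum.swap) (rule refl)
qed

lemma T1:
  assumes l: "(l::'a) \<notin> range (\<lambda>x. x ^ p)" and sub: "Aset p l \<subseteq> Aset p \<alpha>"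
    and h: "\<forall>k<p. \<alpha> ^ k * y \<in> Rset p l 1"
  shows "y = 0"
proof (rule ccontr)
  assume y0: "y \<noteq> 0"
  have "\<forall>k<p. \<exists>v. \<alpha> ^ k * y = lin p l v 0" using h by auto
  then obtain V where V: "\<And>k. k < p \<Longrightarrow> \<alpha> ^ k * y = lin p l (V k) 0" by metis
  have "y = lin p l (V 0) 0" using V[of 0] p2 by simp
  then have "y \<in> Aset p l" using lin_A by simp
  then have "l ^ (p - 1) * inverse y \<in> Aset p l"
    by (intro A_mul A_pow A_x A_inv)
  then have "l ^ (p - 1) * inverse y \<in> Aset p \<alpha>" using sub by blast
  then obtain c where c: "l ^ (p - 1) * inverse y = (\<Sum>k<p. c k ^ p * \<alpha> ^ k)" by (auto simp: Aset_def)
  have "l ^ (p - 1) = (l ^ (p - 1) * inverse y) * y" using y0 by simp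
  also have "\<dots> = (\<Sum>k<p. c k ^ p * (\<alpha> ^ k * y))" unfolding c by (simp add: sum_distrib_right mult.assoc)
  also have "\<dots> = (\<Sum>k<p. lin p l (\<lambda>i. c k * V k i) (c k * 0))"
    by (intro sum.cong refl) (simp add: V lin_scale)
  also have "\<dots> = lin p l (\<lambda>i. \<Sum>k<p. c k * V k i) 0" by (simp add: lin_sum)
  finally have "lin p l (\<lambda>_. 0) 1 = lin p l (\<lambda>i. \<Sum>k<p. c k * V k i) 0"
    using p2 by (simp add: lin_def power_0_left)
  from lin_unique[OF l this] show False by simp
qed

lemma T_m:
  assumes l: "(l::'a) \<notin> range (\<lambda>x. x ^ p)" and sub: "Aset p l \<subseteq> Aset p \<alpha>"
  shows "m \<ge> 1 \<Longrightarrow> \<forall>k<p ^ m. \<alpha> ^ k * y \<in> Rset p l m \<Longrightarrow> y = 0"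
proof (induction m arbitrary: y)
  case 0 then show ?case by simp
next
  case (Suc m)
  show ?case
  proof (cases "m = 0")
    case True
    then have "\<forall>k<p. \<alpha> ^ k * y \<in> Rset p l 1" using Suc.prems(2) by simp
    then show ?thesis by (rule T1[OF l sub])
  next
    case False
    have "\<alpha> ^ r * y \<in> Rset p l 1" if r: "r < p" for r
    proof -
      have "1 \<le> p ^ m" using p2 by simp
      then have "p * 1 \<le> p * p ^ m" by (rule mult_left_mono) simp
      then have pp: "p \<le> p ^ Suc m" by simp
      have "r < p ^ Suc m" using r pp by (rule less_le_trans)
      then have "\<alpha> ^ r * y \<in> Rset p l (Suc m)" using Suc.prems by blast
      then obtain v z where vz: "\<alpha> ^ r * y = lin p l v z" "z \<in> Rset p l m" by auto
      have "\<forall>k<p ^ m. \<alpha> ^ k * z \<in> Rset p l m"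
      proof (intro allI impI)
        fix k assume k: "k < p ^ m"
        have "r + p * k < p ^ Suc m"
        proof -
          have "r + p * k < p + p * k" using r by simp
          also have "\<dots> = p * (k + 1)" by (simp add: algebra_simps)
          also have "\<dots> \<le> p * p ^ m" using k by (intro mult_left_mono) auto
          finally show ?thesis by simp
        qed
        then have "\<alpha> ^ (r + p * k) * y \<in> Rset p l (Suc m)" using Suc.prems by blast
        then obtain v' z' where vz': "\<alpha> ^ (r + p * k) * y = lin p l v' z'" "z' \<in> Rset p l m" by auto
        have "\<alpha> ^ (r + p * k) * y = (\<alpha> ^ k) ^ p * (\<alpha> ^ r * y)"
          by (simp add: power_add mult_ac flip: power_mult)
        also have "\<dots> = lin p l (\<lambda>i. \<alpha> ^ k * v i) (\<alpha> ^ k * z)" unfolding vz(1) by (rule lin_scale)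
        finally have "lin p l v' z' = lin p l (\<lambda>i. \<alpha> ^ k * v i) (\<alpha> ^ k * z)" using vz'(1) by simp
        then have "z' = \<alpha> ^ k * z" using lin_unique[OF l] by blast
        then show "\<alpha> ^ k * z \<in> Rset p l m" using vz'(2) by simp
      qed
      moreover have "m \<ge> 1" using False by simp
      ultimately have "z = 0" using Suc.IH by blast
      then have "\<alpha> ^ r * y = lin p l v 0" using vz(1) by simp
      then show ?thesis by auto
    qed
    then have "\<forall>k<p. \<alpha> ^ k * y \<in> Rset p l 1" by blast
    then show ?thesis by (rule T1[OF l sub])
  qed
qed

lemma Jidx_shift:
  assumes r: "r < p" "r \<noteq> p - 1" and k: "k < p ^ (n - 1)" and n: "n \<ge> 1"
  shows "r + p * k \<in> Jidx p n"
proof -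
  have "r + p * k < p + p * k" using r by simp
  also have "\<dots> = p * (k + 1)" by (simp add: algebra_simps)
  also have "\<dots> \<le> p * p ^ (n - 1)" using k by (intro mult_left_mono) auto
  also have "\<dots> = p ^ n" using n by (metis Suc_diff_le diff_Suc_1 power_Suc)
  finally have "r + p * k < p ^ n" .
  moreover have "(r + p * k) mod p = r" using r by simp
  ultimately show ?thesis using r by (simp add: Jidx_def)
qed

lemma top_zero:
  assumes l: "(l::'a) \<notin> range (\<lambda>x. x ^ p)" and sub: "Aset p l \<subseteq> Aset p \<alpha>" and n: "n \<ge> 2"
    and h: "\<forall>j\<in>Jidx p n. a * \<alpha> ^ j = lin p l (V j) (U j) \<and> U j \<in> Rset p l (n - 1)"
  shows "\<forall>j\<in>Jidx p n. U j = 0"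
proof -
  have key: "U (r + p * k) = \<alpha> ^ k * U r"
    if r: "r < p" "r \<noteq> p - 1" and k: "k < p ^ (n - 1)" for r k
  proof -
    have j: "r + p * k \<in> Jidx p n" using Jidx_shift[OF r k] n by simp
    have "0 < p ^ (n - 1)" using p2 by simp
    from Jidx_shift[OF r this] n have r0: "r \<in> Jidx p n" by simp
    have "lin p l (V (r + p * k)) (U (r + p * k)) = a * \<alpha> ^ (r + p * k)" using h j by simp
    also have "\<dots> = (\<alpha> ^ k) ^ p * (a * \<alpha> ^ r)"
      by (simp add: power_add mult_ac flip: power_mult)
    also have "\<dots> = lin p l (\<lambda>i. \<alpha> ^ k * V r i) (\<alpha> ^ k * U r)" using h r0 by (simp add: lin_scale)
    finally show ?thesis using lin_unique[OF l] by blast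
  qed
  have Ur: "U r = 0" if r: "r < p" "r \<noteq> p - 1" for r
  proof (rule T_m[OF l sub])
    show "1 \<le> n - 1" using n by simp
    show "\<forall>k<p ^ (n - 1). \<alpha> ^ k * U r \<in> Rset p l (n - 1)"
    proof (intro allI impI)
      fix k assume k: "k < p ^ (n - 1)"
      have "r + p * k \<in> Jidx p n" using Jidx_shift[OF r k] n by simp
      then have "U (r + p * k) \<in> Rset p l (n - 1)" using h by blast
      then show "\<alpha> ^ k * U r \<in> Rset p l (n - 1)" using key[OF r k] by simp
    qed
  qed
  show ?thesis
  proof
    fix j assume j: "j \<in> Jidx p n"
    define r k where "r = j mod p" and "k = j div p"
    have jrk: "j = r + p * k" by (simp add: r_def k_def)
    have r: "r < p" "r \<noteq> p - 1" using j p2 by (auto simp: r_def Jidx_def)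
    have "j < p * p ^ (n - 1)" using j n by (simp add: Jidx_def flip: power_Suc)
    then have k: "k < p ^ (n - 1)" unfolding k_def by (simp add: less_mult_imp_div_less mult.commute)
    show "U j = 0" using key[OF r k] Ur[OF r] jrk by simp
  qed
qed

end


definition sig :: "nat \<Rightarrow> var \<Rightarrow> 'k::field poly poly" where
  "sig j v = (case v of SV \<Rightarrow> monom 1 1 | SJ k \<Rightarrow> (if k = j then [:monom 1 1:] else 0))"

definition phi :: "'k::field mpoly \<Rightarrow> nat \<Rightarrow> 'k poly" where
  "phi P j = (\<Sum>m\<in>Poly_Mapping.keys P. if m \<in> range (Poly_Mapping.single (SJ j))
      then monom (Poly_Mapping.lookup P m) (Poly_Mapping.lookup m (SJ j)) else 0)"

lemma coeff_phi: "coeff (phi P j) k = Poly_Mapping.lookup P (Poly_Mapping.single (SJ j) k)"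
proof -
  have "coeff (phi P j) k = (\<Sum>m\<in>Poly_Mapping.keys P.
      if m = Poly_Mapping.single (SJ j) k then Poly_Mapping.lookup P m else 0)"
    unfolding phi_def coeff_sum
    by (intro sum.cong refl) (auto simp: coeff_monom)
  also have "\<dots> = Poly_Mapping.lookup P (Poly_Mapping.single (SJ j) k)"
    by (subst sum.delta) (auto simp: in_keys_iff)
  finally show ?thesis .
qed

lemma const_sum: "[:sum f A:] = (\<Sum>x\<in>A. [:f x:])"
proof (induction A rule: infinite_finite_induct)
  case (insert x F)
  have "[:sum f (insert x F):] = [:f x:] + [:sum f F:]" using insert(1,2) by simp
  then show ?case using insert by simp
qed auto

lemma single_SV_ne: "Poly_Mapping.single SV (1::nat) \<noteq> Poly_Mapping.single (SJ j) k"
proof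
  assume "Poly_Mapping.single SV 1 = Poly_Mapping.single (SJ j) k"
  then have "Poly_Mapping.lookup (Poly_Mapping.single SV 1) SV = Poly_Mapping.lookup (Poly_Mapping.single (SJ j) k) SV"
    by simp
  then show False by (simp add: lookup_single)
qed

lemma keys_char:
  assumes "hom_coord p n P" "m \<in> Poly_Mapping.keys P" "prime p"
  shows "m = Poly_Mapping.single SV 1 \<or> (\<exists>k e. k \<in> Jidx p n \<and> m = Poly_Mapping.single (SJ k) (p ^ e))"
proof -
  obtain v e where m: "m = Poly_Mapping.single v (p ^ e)"
    using assms unfolding hom_coord_def is_ppoly_def by blast
  have pe: "p ^ e \<noteq> 0" using assms(3) by (simp add: prime_gt_0_nat)
  show ?thesis
  proof (cases v)
    case SV
    have "Poly_Mapping.lookup m SV \<le> 1" using assms unfolding hom_coord_def degS_le1_def by blast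
    moreover have "p > 1" using assms(3) prime_gt_1_nat by blast
    ultimately have "p ^ e = 1" using m SV pe by (metis One_nat_def le_neq_implies_less less_one lookup_single_eq)
    then have "m = Poly_Mapping.single SV 1" using m SV by (simp only:)
    then show ?thesis by blast
  next
    case (SJ k)
    have "k \<in> Jidx p n" using assms(1,2) m SJ pe unfolding hom_coord_def by force
    then show ?thesis using m SJ by blast
  qed
qed

lemma ev_hc:
  assumes "hom_coord p n P" "prime p"
  shows "ev (sig j) P = [:phi P j:] + monom [:Poly_Mapping.lookup P (Poly_Mapping.single SV 1):] 1"
proof -
  let ?a = "Poly_Mapping.lookup P (Poly_Mapping.single SV 1)"
  have "monom [:?a:] 1 = (\<Sum>m\<in>Poly_Mapping.keys P. if m = Poly_Mapping.single SV 1
      then monom [:Poly_Mapping.lookup P m:] 1 else 0)"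
    by (subst sum.delta) (auto simp: in_keys_iff)
  then have rhs: "[:phi P j:] + monom [:?a:] 1 = (\<Sum>m\<in>Poly_Mapping.keys P.
      [:if m \<in> range (Poly_Mapping.single (SJ j))
      then monom (Poly_Mapping.lookup P m) (Poly_Mapping.lookup m (SJ j)) else 0:] +
      (if m = Poly_Mapping.single SV 1 then monom [:Poly_Mapping.lookup P m:] 1 else 0))"
    by (simp add: phi_def const_sum sum.distrib)
  have pe: "p ^ e \<noteq> 0" for e using assms(2) by (simp add: prime_gt_0_nat)
  show ?thesis
    unfolding rhs ev_def
  proof (intro sum.cong refl)
    fix m assume mk: "m \<in> Poly_Mapping.keys P"
    let ?c = "Poly_Mapping.lookup P m"
    from keys_char[OF assms(1) mk assms(2)] show "[:[:?c:]:] * mon (sig j) m =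
      [:if m \<in> range (Poly_Mapping.single (SJ j))
      then monom ?c (Poly_Mapping.lookup m (SJ j)) else 0:] +
      (if m = Poly_Mapping.single SV 1 then monom [:?c:] 1 else 0)"
    proof
      assume m: "m = Poly_Mapping.single SV 1"
      have "m \<notin> range (Poly_Mapping.single (SJ j))" using single_SV_ne m by (metis rangeE)
      then show ?thesis using m by (simp add: sig_def smult_monom)
    next
      assume "\<exists>k e. k \<in> Jidx p n \<and> m = Poly_Mapping.single (SJ k) (p ^ e)"
      then obtain k e where m: "m = Poly_Mapping.single (SJ k) (p ^ e)" by blast
      have n1: "m \<noteq> Poly_Mapping.single SV 1" using m single_SV_ne by metis
      show ?thesis
      proof (cases "k = j")
        case True
        then show ?thesis using m n1 pe
          by (simp add: sig_def poly_const_pow monom_power smult_monom)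
      next
        case False
        have nr: "m \<notin> range (Poly_Mapping.single (SJ j))"
        proof
          assume "m \<in> range (Poly_Mapping.single (SJ j))"
          then obtain t where "m = Poly_Mapping.single (SJ j) t" by auto
          then have "Poly_Mapping.lookup m (SJ k) = 0" using False by (simp add: lookup_single)
          then show False using m pe[of e] by simp
        qed
        have p0: "0 < p" using assms(2) prime_gt_0_nat by blast
        then show ?thesis using m n1 pe False nr by (simp add: sig_def power_0_left)
      qed
    qed
  qed
qed

lemma finite_Jidx: "finite (Jidx p n)"
  by (rule finite_subset[of _ "{..<p ^ n}"]) (auto simp: Jidx_def)

lemma ev_Veq:
  assumes j: "j \<in> Jidx p n" and p: "p \<ge> 2"
  shows "ev (sig j) (Veq p n \<alpha>) = - monom 1 1 + monom [:\<alpha> ^ (p - 1):] p + [:monom (\<alpha> ^ j) (p ^ n):]"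
proof -
  have pn: "p ^ n \<noteq> 0" using p by simp
  have "(\<Sum>k\<in>Jidx p n. ev (sig j) (mconst (\<alpha> ^ k) * mvar (SJ k) ^ p ^ n))
      = (\<Sum>k\<in>Jidx p n. if k = j then [:monom (\<alpha> ^ k) (p ^ n):] else 0)"
    using pn by (intro sum.cong refl) (auto simp: ev_mult ev_power sig_def poly_const_pow monom_power smult_monom power_0_left)
  also have "\<dots> = [:monom (\<alpha> ^ j) (p ^ n):]" using j finite_Jidx by (simp add: sum.delta)
  finally have S: "(\<Sum>k\<in>Jidx p n. ev (sig j) (mconst (\<alpha> ^ k) * mvar (SJ k) ^ p ^ n)) = [:monom (\<alpha> ^ j) (p ^ n):]" .
  show ?thesis
    unfolding Veq_def ev_add ev_uminus ev_sum S
    by (simp add: ev_mult ev_power sig_def monom_power smult_monom)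
qed

lemma single_mono_power:
  "(Poly_Mapping.single (Poly_Mapping.single v (1::nat)) (1::'k::comm_ring_1)) ^ N
     = Poly_Mapping.single (Poly_Mapping.single v N) 1"
proof (induction N)
  case (Suc N)
  have "Poly_Mapping.single v (1::nat) + Poly_Mapping.single v N = Poly_Mapping.single v (Suc N)"
    by (metis single_add plus_1_eq_Suc)
  then show ?case using Suc by (simp only: power_Suc mult_single) simp
qed simp

lemma reconstruct:
  fixes P :: "'k::field mpoly"
  assumes N: "N \<noteq> 0"
    and h: "\<forall>m\<in>Poly_Mapping.keys P. m = Poly_Mapping.single SV 1 \<or> (\<exists>j\<in>Jidx p n. m = Poly_Mapping.single (SJ j) N)"
  shows "P = mconst (Poly_Mapping.lookup P (Poly_Mapping.single SV 1)) * mvar SV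
    + (\<Sum>j\<in>Jidx p n. mconst (Poly_Mapping.lookup P (Poly_Mapping.single (SJ j) N)) * mvar (SJ j) ^ N)"
proof (rule poly_mapping_eqI)
  fix m
  have e1: "mconst c * mvar SV = Poly_Mapping.single (Poly_Mapping.single SV 1) c" for c :: 'k
    by (simp add: mconst_def mvar_def mult_single)
  have e2: "mconst c * mvar (SJ j) ^ N = Poly_Mapping.single (Poly_Mapping.single (SJ j) N) c" for c :: 'k and j
    by (simp only: mconst_def mvar_def single_mono_power mult_single) simp
  have inj: "Poly_Mapping.single (SJ j) N = Poly_Mapping.single (SJ j') N \<longleftrightarrow> j = j'" for j j'
    using N by (metis inj_single injD var.inject single_zero lookup_single_eq lookup_single_not_eq)
  let ?R = "Poly_Mapping.lookup (mconst (Poly_Mapping.lookup P (Poly_Mapping.single SV 1)) * mvar SV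
    + (\<Sum>j\<in>Jidx p n. mconst (Poly_Mapping.lookup P (Poly_Mapping.single (SJ j) N)) * mvar (SJ j) ^ N)) m"
  have R: "?R = (if m = Poly_Mapping.single SV 1 then Poly_Mapping.lookup P (Poly_Mapping.single SV 1) else 0)
     + (\<Sum>j\<in>Jidx p n. if m = Poly_Mapping.single (SJ j) N then Poly_Mapping.lookup P (Poly_Mapping.single (SJ j) N) else 0)"
    unfolding e1 e2 lookup_add lookup_sum by (simp add: lookup_single when_def eq_commute)
  show "Poly_Mapping.lookup P m = ?R"
  proof (cases "m = Poly_Mapping.single SV 1")
    case True
    then have "\<And>j. m \<noteq> Poly_Mapping.single (SJ j) N" using single_SV_ne by metis
    then show ?thesis unfolding R using True by simp
  next
    case False
    show ?thesis
    proof (cases "\<exists>j\<in>Jidx p n. m = Poly_Mapping.single (SJ j) N")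
      case True
      then obtain j0 where j0: "j0 \<in> Jidx p n" "m = Poly_Mapping.single (SJ j0) N" by blast
      have "(\<Sum>j\<in>Jidx p n. if m = Poly_Mapping.single (SJ j) N then Poly_Mapping.lookup P (Poly_Mapping.single (SJ j) N) else 0)
          = (\<Sum>j\<in>Jidx p n. if j = j0 then Poly_Mapping.lookup P m else 0)"
        using j0 inj by (intro sum.cong refl) auto
      also have "\<dots> = Poly_Mapping.lookup P m" using j0 finite_Jidx by (simp add: sum.delta)
      finally show ?thesis unfolding R using False by simp
    next
      case F2: False
      then have "m \<notin> Poly_Mapping.keys P" using h False by blast
      then show ?thesis unfolding R using False F2 by (auto simp: in_keys_iff)
    qed
  qed
qed

lemma coeff_c1: "coeff [:x:] k = (if k = 0 then x else 0)"
  by (simp add: coeff_pCons split: nat.splits)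

lemma coeff_cm: "coeff ([:x:] + monom y d) k = (if k = 0 then x else 0) + (if k = d then y else 0)"
  by (simp add: coeff_monom coeff_pCons split: nat.splits)

lemma biv:
  fixes \<alpha> lam :: "'k::field" and F :: "'k mpoly" and Fs :: "nat \<Rightarrow> 'k mpoly"
  assumes ch: "CHAR('k) = p" and pr: "prime p" and hom: "is_hom_V p n \<alpha> lam F Fs"
    and j: "j \<in> Jidx p n" and a0: "\<alpha> \<noteq> 0"
  defines "a \<equiv> Poly_Mapping.lookup F (Poly_Mapping.single SV 1)"
    and "ai \<equiv> \<lambda>i. Poly_Mapping.lookup (Fs i) (Poly_Mapping.single SV 1)"
  shows "- phi F j + smult (lam ^ (p - 1)) (phi F j ^ p) + (\<Sum>i<p - 1. smult (lam ^ i) (phi (Fs i) j ^ p))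
           = monom (a * \<alpha> ^ j) (p ^ n)"
    and "lin p lam ai a = a * \<alpha> ^ (p - 1)"
proof -
  have p2: "p \<ge> 2" using pr prime_ge_2_nat by blast
  have hF: "hom_coord p n F" and hFs: "\<And>i. i < p - 1 \<Longrightarrow> hom_coord p n (Fs i)"
    and dv: "Veq p n \<alpha> dvd (- F + mconst (lam ^ (p - 1)) * F ^ p + (\<Sum>i<p - 1. mconst (lam ^ i) * Fs i ^ p))"
    using hom by (auto simp: is_hom_V_def)
  obtain Q where Q: "- F + mconst (lam ^ (p - 1)) * F ^ p + (\<Sum>i<p - 1. mconst (lam ^ i) * Fs i ^ p) = Veq p n \<alpha> * Q"
    using dv by (elim dvdE)
  have chp: "CHAR('k poly poly) = p" using ch by simp
  have fr: "([:x:] + monom y 1) ^ p = [:x ^ p:] + monom (y ^ p) p" for x y :: "'k poly"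
  proof -
    have "([:x:] + monom y 1) ^ p = [:x:] ^ p + monom y 1 ^ p"
      by (rule freshmans_dream) (use chp pr in auto)
    then show ?thesis by (simp add: poly_const_pow monom_power)
  qed
  have eF: "ev (sig j) F = [:phi F j:] + monom [:a:] 1" using ev_hc[OF hF pr] by (simp add: a_def)
  have eFs: "ev (sig j) (Fs i) = [:phi (Fs i) j:] + monom [:ai i:] 1" if "i < p - 1" for i
    using ev_hc[OF hFs[OF that] pr] by (simp add: ai_def)
  define GE where "GE = - ([:phi F j:] + monom [:a:] 1)
      + smult [:lam ^ (p - 1):] ([:phi F j ^ p:] + monom [:a ^ p:] p)
      + (\<Sum>i<p - 1. smult [:lam ^ i:] ([:phi (Fs i) j ^ p:] + monom [:ai i ^ p:] p))"
  have GE: "ev (sig j) (- F + mconst (lam ^ (p - 1)) * F ^ p + (\<Sum>i<p - 1. mconst (lam ^ i) * Fs i ^ p)) = GE"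
    unfolding GE_def ev_add ev_uminus ev_sum ev_mult ev_power ev_mconst eF fr
    by (intro arg_cong2[where f="(+)"] refl sum.cong) (simp_all add: eFs fr fr[unfolded One_nat_def] poly_const_pow)
  define W where "W = - monom 1 1 + monom [:\<alpha> ^ (p - 1):] p + [:monom (\<alpha> ^ j) (p ^ n):]"
  have WV: "ev (sig j) (Veq p n \<alpha>) = W" unfolding W_def by (rule ev_Veq[OF j p2])
  define g where "g = ev (sig j) Q"
  have GW: "GE = W * g" using arg_cong[OF Q, of "ev (sig j)"] GE WV by (simp add: ev_mult g_def)
  have cGE: "coeff GE k = - ((if k = 0 then phi F j else 0) + (if k = 1 then [:a:] else 0))
      + smult (lam ^ (p - 1)) ((if k = 0 then phi F j ^ p else 0) + (if k = p then [:a ^ p:] else 0))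
      + (\<Sum>i<p - 1. smult (lam ^ i) ((if k = 0 then phi (Fs i) j ^ p else 0) + (if k = p then [:ai i ^ p:] else 0)))" for k
    unfolding GE_def coeff_add coeff_minus coeff_sum coeff_smult coeff_c1 coeff_monom by simp
  have cW: "coeff W k = - (if k = 1 then 1 else 0) + (if k = p then [:\<alpha> ^ (p - 1):] else 0)
      + (if k = 0 then monom (\<alpha> ^ j) (p ^ n) else 0)" for k
    unfolding W_def by (simp add: coeff_monom coeff_pCons split: nat.splits)
  have degGE: "degree GE \<le> p"
    by (rule degree_le) (use p2 in \<open>auto simp: cGE\<close>)
  have Wp: "coeff W p = [:\<alpha> ^ (p - 1):]" using p2 cW[of p] by simp
  have degW: "degree W = p"
  proof (rule antisym)
    show "degree W \<le> p" by (rule degree_le) (use p2 in \<open>auto simp: cW\<close>)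
    show "p \<le> degree W" using Wp a0 by (intro le_degree) simp
  qed
  have Wnz: "W \<noteq> 0" using Wp a0 by auto
  have "degree g = 0"
  proof (cases "g = 0")
    case False
    then have "degree GE = p + degree g" using GW degW Wnz by (simp add: degree_mult_eq)
    then show ?thesis using degGE by simp
  qed simp
  then obtain g0 where g0: "g = [:g0:]" by (metis degree_eq_zeroE)
  have GW': "coeff GE k = g0 * coeff W k" for k using GW g0 by simp
  have "coeff GE 1 = - [:a:]" using p2 by (simp add: cGE)
  moreover have "coeff W 1 = - 1" using p2 by (simp add: cW)
  ultimately have "[:- a:] = - g0" using GW'[of 1] by simp
  moreover have "- [:- a:] = [:a:]" by simp
  ultimately have "g0 = [:a:]" by (metis minus_minus)
  have cadd: "[:x + y:] = [:x:] + [:y:]" for x y :: 'k by simp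
  have "coeff GE p = [:lam ^ (p - 1) * a ^ p:] + (\<Sum>i<p - 1. [:lam ^ i * ai i ^ p:])"
    using p2 by (simp add: cGE)
  also have "\<dots> = [:lin p lam ai a:]" by (simp only: lin_def cadd const_sum)
  finally have "coeff GE p = [:lin p lam ai a:]" .
  then show "lin p lam ai a = a * \<alpha> ^ (p - 1)" using GW'[of p] Wp \<open>g0 = [:a:]\<close> by (simp add: mult.commute)
  have "coeff GE 0 = - phi F j + smult (lam ^ (p - 1)) (phi F j ^ p) + (\<Sum>i<p - 1. smult (lam ^ i) (phi (Fs i) j ^ p))"
    using p2 by (simp add: cGE)
  moreover have "coeff W 0 = monom (\<alpha> ^ j) (p ^ n)" using p2 by (simp add: cW)
  ultimately show "- phi F j + smult (lam ^ (p - 1)) (phi F j ^ p) + (\<Sum>i<p - 1. smult (lam ^ i) (phi (Fs i) j ^ p))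
           = monom (a * \<alpha> ^ j) (p ^ n)"
    using GW'[of 0] \<open>g0 = [:a:]\<close> by (simp add: smult_monom)
qed

lemma down:
  fixes n :: nat and U :: "nat \<Rightarrow> 'a::field" and V :: "nat \<Rightarrow> nat \<Rightarrow> 'a"
  assumes lz: "\<And>v y. lin p l v y = 0 \<Longrightarrow> y = 0 \<and> (\<forall>i<p - 1. v i = 0)"
    and rec: "\<forall>e. 1 \<le> e \<and> e < n \<longrightarrow> U e = lin p l (\<lambda>i. V i (e - 1)) (U (e - 1))"
    and top: "U (n - 1) = 0"
  shows "\<forall>e<n - 1. U e = 0 \<and> (\<forall>i<p - 1. V i e = 0)"
proof -
  have cl: "d < n \<Longrightarrow> U (n - 1 - d) = 0" for d
  proof (induction d)
    case 0 then show ?case using top by simp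
  next
    case (Suc d)
    define e where "e = n - 1 - Suc d"
    have e1: "Suc e = n - 1 - d" "1 \<le> Suc e" "Suc e < n" using Suc.prems by (auto simp: e_def)
    have "U (Suc e) = lin p l (\<lambda>i. V i e) (U e)" using rec e1 by (metis diff_Suc_1)
    moreover have "U (Suc e) = 0" using Suc e1 by simp
    ultimately show ?case using lz unfolding e_def by metis
  qed
  show ?thesis
  proof (intro allI impI)
    fix e assume e: "e < n - 1"
    have "U (Suc e) = 0" using cl[of "n - 1 - Suc e"] e by (simp add: Suc_diff_Suc)
    moreover have "U (Suc e) = lin p l (\<lambda>i. V i e) (U e)" using rec e by (metis diff_Suc_1 le_add1 plus_1_eq_Suc less_diff_conv add.commute)
    ultimately show "U e = 0 \<and> (\<forall>i<p - 1. V i e = 0)" using lz by metis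
  qed
qed

lemma U_Rset:
  fixes n :: nat and U :: "nat \<Rightarrow> 'a::field" and V :: "nat \<Rightarrow> nat \<Rightarrow> 'a"
  assumes "U 0 = 0" and rec: "\<forall>e. 1 \<le> e \<and> e < n \<longrightarrow> U e = lin p l (\<lambda>i. V i (e - 1)) (U (e - 1))"
  shows "e < n \<Longrightarrow> U e \<in> Rset p l e"
proof (induction e)
  case 0 then show ?case using assms(1) by simp
next
  case (Suc e)
  have "U (Suc e) = lin p l (\<lambda>i. V i e) (U e)" using rec Suc.prems by (metis diff_Suc_1 le_add1 plus_1_eq_Suc add.commute)
  then show ?case using Suc by auto
qed

theorem lemma3p3:
  fixes \<alpha> lam :: "'k::field" and p n :: nat
    and F :: "'k mpoly" and Fs :: "nat \<Rightarrow> 'k mpoly"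
  assumes "CHAR('k) = p" and "prime p" and "n \<ge> 1"
    and "\<alpha> \<notin> range (\<lambda>x. x ^ p)" and "lam \<notin> range (\<lambda>x. x ^ p)"
    and "is_hom_V p n \<alpha> lam F Fs"
    and "F \<noteq> 0 \<or> (\<exists>j<p - 1. Fs j \<noteq> 0)"
  shows "Kp_adj p \<alpha> = Kp_adj p lam
    \<and> (\<forall>P \<in> insert F (Fs ` {..<p - 1}). \<exists>a b.
          P = mconst a * mvar SV + (\<Sum>j\<in>Jidx p n. mconst (b j) * mvar (SJ j) ^ (p ^ (n - 1))))
    \<and> (\<exists>a. a \<noteq> 0 \<and> F = mconst a * mvar SV)"
proof -
  note ch = assms(1) and pr = assms(2) and n1 = assms(3) and aK = assms(4) and lK = assms(5)
    and hom = assms(6) and nz = assms(7)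
  interpret cp: charp p "TYPE('k)" using ch pr by unfold_locales
  have p2: "p \<ge> 2" by (rule cp.p2)
  have "(0::'k) ^ p = 0" using p2 by simp
  then have a0: "\<alpha> \<noteq> 0" using aK by (metis rangeI)
  have hF: "hom_coord p n F" and hFs: "\<And>i. i < p - 1 \<Longrightarrow> hom_coord p n (Fs i)"
    using hom by (auto simp: is_hom_V_def)
  define a where "a = Poly_Mapping.lookup F (Poly_Mapping.single SV 1)"
  define ai where "ai = (\<lambda>i. Poly_Mapping.lookup (Fs i) (Poly_Mapping.single SV 1))"
  define U where "U = (\<lambda>j e. Poly_Mapping.lookup F (Poly_Mapping.single (SJ j) (p ^ e)))"
  define V where "V = (\<lambda>j i e. Poly_Mapping.lookup (Fs i) (Poly_Mapping.single (SJ j) (p ^ e)))"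
  have lz: "\<And>v y. lin p lam v y = 0 \<Longrightarrow> y = 0 \<and> (\<forall>i<p - 1. v i = 0)"
    using cp.lin_zero[OF lK] by blast
  have J0: "0 \<in> Jidx p n" using p2 by (simp add: Jidx_def)
  have P: "(\<forall>e\<ge>n. U j e = 0 \<and> (\<forall>i<p - 1. V j i e = 0))
      \<and> U j 0 = 0
      \<and> (\<forall>e. 1 \<le> e \<and> e < n \<longrightarrow> U j e = lin p lam (\<lambda>i. V j i (e - 1)) (U j (e - 1)))
      \<and> a * \<alpha> ^ j = lin p lam (\<lambda>i. V j i (n - 1)) (U j (n - 1))" if j: "j \<in> Jidx p n" for j
  proof -
    have h: "- phi F j + smult (lam ^ (p - 1)) (phi F j ^ p) + (\<Sum>i<p - 1. smult (lam ^ i) (phi (Fs i) j ^ p))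
           = monom (a * \<alpha> ^ j) (p ^ n)"
      using biv(1)[OF ch pr hom j a0] by (simp add: a_def)
    note r = cp.part4[OF lK n1 h]
    show ?thesis using r by (simp add: U_def V_def coeff_phi)
  qed
  have Srel: "lin p lam ai a = a * \<alpha> ^ (p - 1)"
    using biv(2)[OF ch pr hom J0 a0] by (simp add: a_def ai_def)
  have Fzero: "P = 0" if hc: "hom_coord p n P"
    and z1: "Poly_Mapping.lookup P (Poly_Mapping.single SV 1) = 0"
    and z2: "\<And>k e. k \<in> Jidx p n \<Longrightarrow> Poly_Mapping.lookup P (Poly_Mapping.single (SJ k) (p ^ e)) = 0"
    for P :: "'k mpoly"
  proof (rule poly_mapping_eqI)
    fix m
    show "Poly_Mapping.lookup P m = Poly_Mapping.lookup 0 m"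
    proof (cases "m \<in> Poly_Mapping.keys P")
      case True
      from keys_char[OF hc True pr] have "Poly_Mapping.lookup P m = 0" using z1 z2 by auto
      then show ?thesis using True by (simp add: in_keys_iff)
    next
      case False then show ?thesis by (simp add: in_keys_iff)
    qed
  qed
  have zeros_of_top: "\<forall>e<n - 1. U j e = 0 \<and> (\<forall>i<p - 1. V j i e = 0)"
    if j: "j \<in> Jidx p n" and t: "U j (n - 1) = 0" for j
  proof -
    have rec: "\<forall>e. 1 \<le> e \<and> e < n \<longrightarrow> U j e = lin p lam (\<lambda>i. V j i (e - 1)) (U j (e - 1))"
      using P[OF j] by blast
    show ?thesis using down[where U = "U j" and V = "\<lambda>i e. V j i e", OF lz rec t] by simp
  qed
  have anz: "a \<noteq> 0"
  proof
    assume a: "a = 0"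
    have allz: "U j e = 0 \<and> (\<forall>i<p - 1. V j i e = 0)" if j: "j \<in> Jidx p n" for j e
    proof -
      have "lin p lam (\<lambda>i. V j i (n - 1)) (U j (n - 1)) = 0" using P[OF j] a by simp
      from lz[OF this] have top: "U j (n - 1) = 0 \<and> (\<forall>i<p - 1. V j i (n - 1) = 0)" by simp
      have low: "\<forall>e<n - 1. U j e = 0 \<and> (\<forall>i<p - 1. V j i e = 0)"
        using zeros_of_top[OF j] top by blast
      have high: "\<forall>e\<ge>n. U j e = 0 \<and> (\<forall>i<p - 1. V j i e = 0)" using P[OF j] by blast
      show ?thesis
      proof (cases "e < n - 1")
        case True then show ?thesis using low by blast
      next
        case False
        then have "e = n - 1 \<or> e \<ge> n" by linarith
        then show ?thesis using top high by blast
      qed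
    qed
    have "lin p lam ai 0 = 0" using Srel a by simp
    from lz[OF this] have aiz: "\<forall>i<p - 1. ai i = 0" by blast
    have "F = 0"
    proof (rule Fzero[OF hF])
      show "Poly_Mapping.lookup F (Poly_Mapping.single SV 1) = 0" using a by (simp add: a_def)
      fix k e assume "k \<in> Jidx p n"
      then show "Poly_Mapping.lookup F (Poly_Mapping.single (SJ k) (p ^ e)) = 0"
        using allz[of k e] by (simp add: U_def)
    qed
    moreover have "Fs i = 0" if i: "i < p - 1" for i
    proof (rule Fzero[OF hFs[OF i]])
      show "Poly_Mapping.lookup (Fs i) (Poly_Mapping.single SV 1) = 0" using aiz i by (simp add: ai_def)
      fix k e assume "k \<in> Jidx p n"
      then show "Poly_Mapping.lookup (Fs i) (Poly_Mapping.single (SJ k) (p ^ e)) = 0"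
        using allz[of k e] i by (simp add: V_def)
    qed
    ultimately show False using nz by blast
  qed
  have a_eq: "a = lin p lam (\<lambda>i. V 0 i (n - 1)) (U 0 (n - 1))" using P[OF J0] by simp
  have a_in: "a \<in> Aset p lam" unfolding a_eq by (rule cp.lin_A)
  define Bv where "Bv = a * \<alpha> ^ (p - 1)"
  have Bv_in: "Bv \<in> Aset p lam" unfolding Bv_def Srel[symmetric] by (rule cp.lin_A)
  have Bv0: "Bv \<noteq> 0" using anz a0 by (simp add: Bv_def)
  have alpha_eq: "\<alpha> = \<alpha> ^ p * a * inverse Bv"
  proof -
    have "\<alpha> ^ p = \<alpha> * \<alpha> ^ (p - 1)" using p2 by (metis Suc_diff_1 le_less_trans less_2_cases_iff not_less power_Suc zero_less_numeral less_numeral_extra(1) linorder_not_le)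
    then show ?thesis using anz a0 by (simp add: Bv_def field_simps)
  qed
  have alpha_in: "\<alpha> \<in> Aset p lam"
    by (subst alpha_eq) (intro cp.A_mul cp.A_Kp a_in cp.A_inv Bv_in)
  have sub1: "Aset p \<alpha> \<subseteq> Aset p lam"
    by (rule cp.A_min[OF cp.A_subfield _ alpha_in]) (auto intro: cp.A_Kp)
  have lam_in: "lam \<in> Aset p \<alpha>"
  proof (rule ccontr)
    assume lE: "lam \<notin> Aset p \<alpha>"
    define b where "b = (\<lambda>i. if i = p - 1 then a else ai i)"
    define c where "c = (\<lambda>i. if i = p - 1 then U 0 (n - 1) else V 0 i (n - 1))"
    have Bs: "Bv = (\<Sum>i<p. b i ^ p * lam ^ i)" unfolding Bv_def Srel[symmetric] b_def by (rule cp.lin_as_sum)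
    have As: "a = (\<Sum>i<p. c i ^ p * lam ^ i)" unfolding c_def by (subst a_eq) (rule cp.lin_as_sum)
    define e where "e = (\<lambda>i. b i ^ p * \<alpha> - \<alpha> ^ p * c i ^ p)"
    have "(\<Sum>i<p. e i * lam ^ i) = Bv * \<alpha> - \<alpha> ^ p * a"
      unfolding Bs As e_def by (simp add: sum_distrib_left sum_distrib_right sum_subtractf algebra_simps)
    also have "\<dots> = 0"
    proof -
      have "\<alpha> ^ p = \<alpha> ^ (p - 1) * \<alpha>" using p2 by (metis Suc_diff_1 le_less_trans less_2_cases_iff not_less power_Suc2 zero_less_numeral less_numeral_extra(1) linorder_not_le)
      then show ?thesis by (simp add: Bv_def algebra_simps)
    qed
    finally have s0: "(\<Sum>i<p. e i * lam ^ i) = 0" .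
    have eE: "\<forall>i<p. e i \<in> Aset p \<alpha>"
      unfolding e_def diff_conv_add_uminus
      by (intro allI impI cp.A_add cp.A_neg cp.A_mul cp.A_Kp cp.A_x)
    have ez: "\<forall>i<p. e i = 0"
      by (rule indep[OF ch pr cp.A_subfield cp.A_Kp lE eE s0])
    obtain i where i: "i < p" "c i \<noteq> 0"
    proof (rule ccontr)
      assume "\<not> thesis"
      then have "\<forall>i<p. c i = 0" using that by blast
      then have "a = 0" unfolding As using p2 by (simp add: power_0_left)
      then show False using anz by simp
    qed
    have "b i ^ p * \<alpha> = \<alpha> ^ p * c i ^ p" using ez i(1) by (simp add: e_def)
    moreover have "\<alpha> ^ p * c i ^ p \<noteq> 0" using a0 i(2) by simp
    ultimately have bi: "b i \<noteq> 0" by (metis mult_zero_left zero_power p2 not_numeral_le_zero neq0_conv)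
    have "\<alpha> = (\<alpha> * c i / b i) ^ p"
      using \<open>b i ^ p * \<alpha> = \<alpha> ^ p * c i ^ p\<close> bi by (simp add: power_divide power_mult_distrib field_simps)
    then show False using aK by (metis rangeI)
  qed
  have sub2: "Aset p lam \<subseteq> Aset p \<alpha>"
    by (rule cp.A_min[OF cp.A_subfield _ lam_in]) (auto intro: cp.A_Kp)
  have KP: "Kp_adj p \<alpha> = Kp_adj p lam"
    using sub1 sub2 by (simp add: cp.Kp_adj_eq)
  have Utop: "\<forall>j\<in>Jidx p n. U j (n - 1) = 0"
  proof (cases "n = 1")
    case True then show ?thesis using P by simp
  next
    case False
    then have n2: "n \<ge> 2" using n1 by simp
    have h: "\<forall>j\<in>Jidx p n. a * \<alpha> ^ j = lin p lam (\<lambda>i. V j i (n - 1)) (U j (n - 1))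
        \<and> U j (n - 1) \<in> Rset p lam (n - 1)"
    proof
      fix j assume j: "j \<in> Jidx p n"
      have rec: "\<forall>e. 1 \<le> e \<and> e < n \<longrightarrow> U j e = lin p lam (\<lambda>i. V j i (e - 1)) (U j (e - 1))"
        using P[OF j] by blast
      have "U j (n - 1) \<in> Rset p lam (n - 1)"
        by (rule U_Rset[where U = "U j" and V = "\<lambda>i e. V j i e"]) (use P[OF j] rec n1 in auto)
      then show "a * \<alpha> ^ j = lin p lam (\<lambda>i. V j i (n - 1)) (U j (n - 1))
        \<and> U j (n - 1) \<in> Rset p lam (n - 1)" using P[OF j] by blast
    qed
    show ?thesis
      using cp.top_zero[OF lK sub2 n2, of a "\<lambda>j i. V j i (n - 1)" "\<lambda>j. U j (n - 1)"] h by blast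
  qed
  have Uz: "U j e = 0" if j: "j \<in> Jidx p n" for j e
  proof -
    have "\<forall>e<n - 1. U j e = 0 \<and> (\<forall>i<p - 1. V j i e = 0)" using zeros_of_top[OF j] Utop j by blast
    moreover have "\<forall>e\<ge>n. U j e = 0" using P[OF j] by blast
    moreover have "U j (n - 1) = 0" using Utop j by blast
    moreover have "e < n - 1 \<or> e = n - 1 \<or> e \<ge> n" by linarith
    ultimately show ?thesis by blast
  qed
  have Vz: "V j i e = 0" if j: "j \<in> Jidx p n" and i: "i < p - 1" and e: "e \<noteq> n - 1" for j i e
  proof (cases "e < n - 1")
    case True then show ?thesis using zeros_of_top[OF j] Utop j i by blast
  next
    case False
    then have "e \<ge> n" using e by linarith
    then show ?thesis using P[OF j] i by blast
  qed
  have N0: "p ^ (n - 1) \<noteq> 0" using p2 by simp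
  have kF: "\<forall>m\<in>Poly_Mapping.keys F. m = Poly_Mapping.single SV 1"
  proof
    fix m assume m: "m \<in> Poly_Mapping.keys F"
    from keys_char[OF hF m pr] show "m = Poly_Mapping.single SV 1"
    proof
      assume "\<exists>k e. k \<in> Jidx p n \<and> m = Poly_Mapping.single (SJ k) (p ^ e)"
      then obtain k e where "k \<in> Jidx p n" "m = Poly_Mapping.single (SJ k) (p ^ e)" by blast
      then have "Poly_Mapping.lookup F m = 0" using Uz by (simp add: U_def)
      then show ?thesis using m by (simp add: in_keys_iff)
    qed
  qed
  have kFs: "\<forall>m\<in>Poly_Mapping.keys (Fs i). m = Poly_Mapping.single SV 1 \<or>
      (\<exists>j\<in>Jidx p n. m = Poly_Mapping.single (SJ j) (p ^ (n - 1)))" if i: "i < p - 1" for i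
  proof
    fix m assume m: "m \<in> Poly_Mapping.keys (Fs i)"
    from keys_char[OF hFs[OF i] m pr] show "m = Poly_Mapping.single SV 1 \<or>
      (\<exists>j\<in>Jidx p n. m = Poly_Mapping.single (SJ j) (p ^ (n - 1)))"
    proof
      assume "\<exists>k e. k \<in> Jidx p n \<and> m = Poly_Mapping.single (SJ k) (p ^ e)"
      then obtain k e where ke: "k \<in> Jidx p n" "m = Poly_Mapping.single (SJ k) (p ^ e)" by blast
      have "e = n - 1"
      proof (rule ccontr)
        assume "e \<noteq> n - 1"
        then have "Poly_Mapping.lookup (Fs i) m = 0" using Vz[OF ke(1) i] ke(2) by (simp add: V_def)
        then show False using m by (simp add: in_keys_iff)
      qed
      then show ?thesis using ke by blast
    qed simp
  qed
  have shape: "\<exists>a b. P = mconst a * mvar SV + (\<Sum>j\<in>Jidx p n. mconst (b j) * mvar (SJ j) ^ (p ^ (n - 1)))"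
    if "P \<in> insert F (Fs ` {..<p - 1})" for P
  proof -
    have "\<forall>m\<in>Poly_Mapping.keys P. m = Poly_Mapping.single SV 1 \<or>
      (\<exists>j\<in>Jidx p n. m = Poly_Mapping.single (SJ j) (p ^ (n - 1)))"
      using that kF kFs by auto
    from reconstruct[OF N0 this] show ?thesis
      by (intro exI[of _ "Poly_Mapping.lookup P (Poly_Mapping.single SV 1)"]
          exI[of _ "\<lambda>j. Poly_Mapping.lookup P (Poly_Mapping.single (SJ j) (p ^ (n - 1)))"])
  qed
  have "F = mconst a * mvar SV + (\<Sum>j\<in>Jidx p n. mconst (Poly_Mapping.lookup F (Poly_Mapping.single (SJ j) (p ^ (n - 1)))) * mvar (SJ j) ^ (p ^ (n - 1)))"
    unfolding a_def by (rule reconstruct[OF N0]) (use kF in blast)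
  also have "(\<Sum>j\<in>Jidx p n. mconst (Poly_Mapping.lookup F (Poly_Mapping.single (SJ j) (p ^ (n - 1)))) * mvar (SJ j) ^ (p ^ (n - 1))) = 0"
    using Uz by (intro sum.neutral) (simp add: U_def mconst_def)
  finally have Fform: "F = mconst a * mvar SV" by simp
  show ?thesis using KP shape Fform anz by blast
qed

end
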